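(* In the generic model, for every rooted forest $w$ the polynomial $\mathcal P(w)\in\mathbb R[x]$ satisfies $$\mathcal P(w)-\frac{(-c_{-1}x)^{|w|}}{w!}\in\mathbb R[x]_{<|w|},$$ i.e. its coefficient of $x^{|w|}$ is $(-c_{-1})^{|w|}/w!$ and it has no higher terms.
   Context: Generic model: $f\colon[0,\infty)\to\mathbb R$ continuous with $f(\zeta)-c/\zeta=O(\zeta^{-1-\epsilon})$ at infinity; Mellin transform $F(z)=\int_0^\infty f(\zeta)\zeta^{-z}d\zeta=\sum_{n\ge-1}c_nz^n$ near $0$. $H_R$ is the Connes–Kreimer Hopf algebra of rooted trees (forests $w$, $|w|$ number of nodes, $w_v$ subtree at node $v$, antipode $S$). $\phi_s(w)=s^{-z|w|}\prod_{v}F(z|w_v|)$ (multiplicative), $\phi_{R,s}=\phi_\mu^{\star-1}\star\phi_s$ for fixed $\mu>0$, and $\mathcal P(w)\in\mathbb R[x]$ is the polynomial with $\lim_{z\to0}\phi_{R,s}(w)=\mathcal P(w)(\ln\frac s\mu)$. Tree factorial: $w!=\prod_{v\in V(w)}|w_v|$. *)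

theory Defs
  imports "HOL-Analysis.Analysis" "HOL-Library.Landau_Symbols"
          "HOL-Computational_Algebra.Polynomial"
begin

text \<open>Rooted trees; a rooted forest is a list of rooted trees (the order is
irrelevant for everything below, since all maps used are multiplicative/symmetric).\<close>
datatype rtree = Node "rtree list"

fun nodes :: "rtree \<Rightarrow> nat" where
  "nodes (Node ts) = Suc (sum_list (map nodes ts))"

definition fnodes :: "rtree list \<Rightarrow> nat" where
  "fnodes w = sum_list (map nodes w)"

text \<open>Tree factorial  w! = prod over nodes v of |w_v|.\<close>
fun tfact :: "rtree \<Rightarrow> nat" where
  "tfact (Node ts) = nodes (Node ts) * prod_list (map tfact ts)"

definition ffact :: "rtree list \<Rightarrow> nat" where
  "ffact w = prod_list (map tfact w)"

text \<open>Coproduct terms.  Each pair (a,b) is a term a \<otimes> b of the coproduct;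
a is the pruned forest, b the trunk (empty forest = unit 1).\<close>
fun comb_cop :: "('a list \<times> 'a list) list list \<Rightarrow> ('a list \<times> 'a list) list" where
  "comb_cop [] = [([], [])]"
| "comb_cop (c # cs) = [(a @ a', b @ b'). (a, b) \<leftarrow> c, (a', b') \<leftarrow> comb_cop cs]"

text \<open>Connes--Kreimer coproduct of a tree via
  Delta(B+(F)) = B+(F) \<otimes> 1 + (id \<otimes> B+) Delta(F).  The first term is T \<otimes> 1.\<close>
fun tcop :: "rtree \<Rightarrow> (rtree list \<times> rtree list) list" where
  "tcop (Node ts) = ([Node ts], []) #
      map (\<lambda>(a, b). (a, [Node b])) (comb_cop (map tcop ts))"

definition fcop :: "rtree list \<Rightarrow> (rtree list \<times> rtree list) list" where
  "fcop w = comb_cop (map tcop w)"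

definition conv :: "(rtree list \<Rightarrow> real) \<Rightarrow> (rtree list \<Rightarrow> real) \<Rightarrow> rtree list \<Rightarrow> real" where
  "conv \<alpha> \<beta> w = sum_list (map (\<lambda>(a, b). \<alpha> a * \<beta> b) (fcop w))"

text \<open>Convolution inverse of a character chi (= chi o S), by the standard recursion
  chi^{-1}(T) = - sum_{terms a \<otimes> b of Delta T other than T \<otimes> 1} chi^{-1}(a) chi(b),
extended multiplicatively to forests.  The nat argument is fuel (at least the
number of nodes), which makes the recursion primitive.\<close>
fun cinv_aux :: "(rtree list \<Rightarrow> real) \<Rightarrow> nat \<Rightarrow> rtree list \<Rightarrow> real" where
  "cinv_aux chi 0 w = 1"
| "cinv_aux chi (Suc n) w =
     prod_list (map (\<lambda>t. - sum_list (map (\<lambda>(a, b). cinv_aux chi n a * chi b) (tl (tcop t)))) w)"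

definition cinv :: "(rtree list \<Rightarrow> real) \<Rightarrow> rtree list \<Rightarrow> real" where
  "cinv chi w = cinv_aux chi (fnodes w) w"

fun vprod :: "(real \<Rightarrow> real) \<Rightarrow> real \<Rightarrow> rtree \<Rightarrow> real" where
  "vprod F z (Node ts) = F (z * real (nodes (Node ts))) * prod_list (map (vprod F z) ts)"

definition phi :: "(real \<Rightarrow> real) \<Rightarrow> real \<Rightarrow> real \<Rightarrow> rtree list \<Rightarrow> real" where
  "phi F s z w = prod_list (map (\<lambda>t. s powr (- (z * real (nodes t))) * vprod F z t) w)"

definition phiR :: "(real \<Rightarrow> real) \<Rightarrow> real \<Rightarrow> real \<Rightarrow> real \<Rightarrow> rtree list \<Rightarrow> real" where
  "phiR F \<mu> s z w = conv (cinv (phi F \<mu> z)) (phi F s z) w"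

definition Lser :: "real \<Rightarrow> (nat \<Rightarrow> real) \<Rightarrow> real \<Rightarrow> real" where
  "Lser cm cn z = cm / z + (\<Sum>n. cn n * z ^ n)"

end

theory Submission
  imports Defs
begin


lemma nodes_pos: "nodes t > 0"
  by (cases t) auto

lemma fnodes_Nil[simp]: "fnodes [] = 0" by (simp add: fnodes_def)
lemma fnodes_Cons[simp]: "fnodes (t # ts) = nodes t + fnodes ts" by (simp add: fnodes_def)
lemma fnodes_append[simp]: "fnodes (a @ b) = fnodes a + fnodes b" by (simp add: fnodes_def)
lemma nodes_Node[simp]: "nodes (Node b) = Suc (fnodes b)" by (simp add: fnodes_def)
declare nodes.simps[simp del]

lemma fnodes_0: "fnodes w = 0 \<longleftrightarrow> w = []"
  using nodes_pos by (cases w) auto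

lemma comb_size:
  assumes "\<forall>t\<in>set ts. \<forall>ab\<in>set (tcop t). fnodes (fst ab) + fnodes (snd ab) = nodes t"
  shows "ab \<in> set (comb_cop (map tcop ts)) \<Longrightarrow> fnodes (fst ab) + fnodes (snd ab) = fnodes ts"
  using assms
proof (induction ts arbitrary: ab)
  case Nil then show ?case by simp
next
  case (Cons t ts)
  from Cons.prems(1) obtain a b a' b' where ab: "ab = (a@a', b@b')" "(a,b) \<in> set (tcop t)"
     "(a',b') \<in> set (comb_cop (map tcop ts))" by auto
  have "fnodes a + fnodes b = nodes t" using Cons.prems(2) ab(2) by fastforce
  moreover have "fnodes a' + fnodes b' = fnodes ts" using Cons.IH[of "(a',b')"] Cons.prems(2) ab(3) by auto
  ultimately show ?case using ab(1) by simp
qed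

lemma tcop_size: "ab \<in> set (tcop t) \<Longrightarrow> fnodes (fst ab) + fnodes (snd ab) = nodes t"
proof (induction t arbitrary: ab)
  case (Node ts)
  show ?case
  proof (cases "ab = ([Node ts], [])")
    case True then show ?thesis by simp
  next
    case False
    with Node.prems obtain a b where ab: "ab = (a, [Node b])" "(a,b) \<in> set (comb_cop (map tcop ts))"
      by auto
    have "fnodes a + fnodes b = fnodes ts"
      using comb_size[of ts "(a,b)"] Node.IH ab(2) by auto
    then show ?thesis using ab by (simp add: nodes_Node)
  qed
qed

lemma fcop_Nil[simp]: "fcop [] = [([],[])]" by (simp add: fcop_def)
lemma fcop_Cons: "fcop (t # ws) = [(a@a', b@b'). (a, b) \<leftarrow> tcop t, (a', b') \<leftarrow> fcop ws]"
  by (simp add: fcop_def)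
lemma tl_tcop: "tl (tcop (Node ts)) = map (\<lambda>(a, b). (a, [Node b])) (fcop ts)"
  by (simp add: fcop_def)
lemma tcop_Node: "tcop (Node ts) = ([Node ts], []) # map (\<lambda>(a, b). (a, [Node b])) (fcop ts)"
  by (simp add: fcop_def)

lemma fcop_size: "ab \<in> set (fcop w) \<Longrightarrow> fnodes (fst ab) + fnodes (snd ab) = fnodes w"
  unfolding fcop_def using comb_size tcop_size by blast

definition cinvT :: "(rtree list \<Rightarrow> real) \<Rightarrow> rtree \<Rightarrow> real" where
  "cinvT chi t = - sum_list (map (\<lambda>(a, b). cinv chi a * chi b) (tl (tcop t)))"

lemma tl_tcop_size: "(a, b) \<in> set (tl (tcop t)) \<Longrightarrow> fnodes a < nodes t"
proof -
  assume h: "(a, b) \<in> set (tl (tcop t))"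
  obtain ts where t: "t = Node ts" by (cases t)
  from h obtain b' where "b = [Node b']" "(a,b) \<in> set (tcop t)" unfolding t tl_tcop tcop_Node by force
  with tcop_size[of "(a,b)" t] nodes_pos[of "Node b'"] show ?thesis by simp
qed

lemma cinv_aux_eq: "fnodes w \<le> m \<Longrightarrow> cinv_aux chi m w = prod_list (map (cinvT chi) w)"
proof (induction m arbitrary: w rule: less_induct)
  case (less m)
  show ?case
  proof (cases m)
    case 0
    then have "w = []" using less.prems fnodes_0 by auto
    then show ?thesis using 0 by simp
  next
    case (Suc m')
    have eqw: "map (\<lambda>t. - sum_list (map (\<lambda>(a, b). cinv_aux chi m' a * chi b) (tl (tcop t)))) w
        = map (cinvT chi) w"
    proof (rule map_cong[OF refl])
      fix t assume t: "t \<in> set w"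
      have "nodes t \<le> fnodes w" using t by (induction w) auto
      have eq: "map (\<lambda>(a, b). cinv_aux chi m' a * chi b) (tl (tcop t))
          = map (\<lambda>(a, b). cinv chi a * chi b) (tl (tcop t))"
      proof (rule map_cong[OF refl])
        fix ab assume ab0: "ab \<in> set (tl (tcop t))"
        obtain a b where abd: "ab = (a,b)" by force
        have ab: "(a,b) \<in> set (tl (tcop t))" using ab0 abd by simp
        have lt: "fnodes a < nodes t" using tl_tcop_size[OF ab] .
        have "cinv_aux chi m' a = prod_list (map (cinvT chi) a)"
          using less.IH[of m' a] Suc lt \<open>nodes t \<le> fnodes w\<close> less.prems by auto
        moreover have "cinv chi a = prod_list (map (cinvT chi) a)"
          unfolding cinv_def using less.IH[of "fnodes a" a] Suc lt \<open>nodes t \<le> fnodes w\<close> less.prems by auto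
        ultimately show "(case ab of (a, b) \<Rightarrow> cinv_aux chi m' a * chi b) = (case ab of (a, b) \<Rightarrow> cinv chi a * chi b)" using abd by simp
      qed
      show "- sum_list (map (\<lambda>(a, b). cinv_aux chi m' a * chi b) (tl (tcop t))) = cinvT chi t"
        by (simp only: cinvT_def eq)
    qed
    show ?thesis unfolding Suc cinv_aux.simps eqw ..
  qed
qed

lemma cinv_prod: "cinv chi w = prod_list (map (cinvT chi) w)"
  unfolding cinv_def by (rule cinv_aux_eq) simp

lemma cinv_append: "cinv chi (a @ b) = cinv chi a * cinv chi b"
  by (simp add: cinv_prod)
lemma cinv_Nil[simp]: "cinv chi [] = 1" by (simp add: cinv_prod)

lemma phi_append: "phi F s z (a @ b) = phi F s z a * phi F s z b"
  by (simp add: phi_def)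
lemma phi_Nil[simp]: "phi F s z [] = 1" by (simp add: phi_def)

lemma phi_alt: "s > 0 \<Longrightarrow> phi F s z b = s powr (- (z * real (fnodes b))) * prod_list (map (vprod F z) b)"
proof (induction b)
  case Nil then show ?case by (simp add: phi_def)
next
  case (Cons t b)
  have "phi F s z (t # b) = s powr (- (z * real (nodes t))) * vprod F z t * phi F s z b"
    by (simp add: phi_def)
  also have "\<dots> = (s powr (- (z * real (nodes t))) * s powr (- (z * real (fnodes b)))) * (vprod F z t * prod_list (map (vprod F z) b))"
    using Cons by simp
  also have "s powr (- (z * real (nodes t))) * s powr (- (z * real (fnodes b))) = s powr (- (z * real (fnodes (t#b))))"
    by (subst powr_add[symmetric]) (simp add: algebra_simps)
  finally show ?case by simp
qed

lemma phi_Node: "phi F s z [Node b] = s powr (- z) * F (z * (real (fnodes b) + 1)) * phi F s z b"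
  if "s > 0"
proof -
  have "s powr (- (z * real (Suc (fnodes b)))) = s powr (-z) * s powr (-(z * real (fnodes b)))"
    by (subst powr_add[symmetric]) (simp add: algebra_simps)
  then show ?thesis using that by (simp add: phi_alt algebra_simps)
qed

lemma phi_shift: "s > 0 \<Longrightarrow> m > 0 \<Longrightarrow>
   phi F s z b = exp (- z * ln (s / m) * real (fnodes b)) * phi F m z b"
  by (simp add: phi_alt powr_def ln_div exp_add[symmetric] algebra_simps)

lemma cinv_single: "cinv chi [Node ts] = - sum_list (map (\<lambda>(a, b). cinv chi a * chi [Node b]) (fcop ts))"
  by (simp add: cinv_prod cinvT_def tl_tcop o_def split_def fcop_def)




definition Rser :: "(nat \<Rightarrow> real) \<Rightarrow> nat \<Rightarrow> real \<Rightarrow> real" where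
  "Rser c N x = (\<Sum>p. c (p + N) * x ^ p)"

lemma summable_shift_pow:
  assumes "summable (\<lambda>n. c n * (x::real) ^ n)"
  shows "summable (\<lambda>p. c (p + N) * x ^ p)"
proof (cases "x = 0")
  case True then show ?thesis by simp
next
  case False
  have "summable (\<lambda>p. c (p + N) * x ^ (p + N))"
    using summable_iff_shift[of "\<lambda>n. c n * x ^ n" N] assms by simp
  then have "summable (\<lambda>p. x ^ N * (c (p + N) * x ^ p))"
    by (simp add: power_add algebra_simps)
  then show ?thesis using False by simp
qed

lemma powser_split:
  assumes "summable (\<lambda>n. c n * (x::real) ^ n)"
  shows "(\<Sum>n. c n * x ^ n) = (\<Sum>p<N. c p * x ^ p) + x ^ N * Rser c N x"
proof -
  have s: "summable (\<lambda>p. c (p + N) * x ^ p)" by (rule summable_shift_pow[OF assms])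
  have "(\<Sum>n. c n * x ^ n) = (\<Sum>p. c (p + N) * x ^ (p + N)) + (\<Sum>p<N. c p * x ^ p)"
    by (rule suminf_split_initial_segment[OF assms])
  also have "(\<Sum>p. c (p + N) * x ^ (p + N)) = (\<Sum>p. x ^ N * (c (p + N) * x ^ p))"
    by (simp add: power_add algebra_simps)
  also have "\<dots> = x ^ N * Rser c N x"
    unfolding Rser_def by (rule suminf_mult[OF s])
  finally show ?thesis by simp
qed

lemma Rser_cont:
  assumes "\<delta> > 0" "\<forall>x. \<bar>x\<bar> < \<delta> \<longrightarrow> summable (\<lambda>n. c n * (x::real) ^ n)"
  shows "isCont (Rser c N) 0"
proof -
  have "summable (\<lambda>p. c (p + N) * (\<delta>/2) ^ p)"
    using assms by (intro summable_shift_pow) auto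
  then show ?thesis unfolding Rser_def
    by (rule isCont_powser) (use assms in simp)
qed

lemma Rser_tendsto:
  assumes "\<delta> > 0" "\<forall>x. \<bar>x\<bar> < \<delta> \<longrightarrow> summable (\<lambda>n. c n * (x::real) ^ n)"
  shows "((\<lambda>z. Rser c N (z * r)) \<longlongrightarrow> Rser c N 0) (at 0)"
proof -
  have "((\<lambda>z. z * r) \<longlongrightarrow> 0 * r) (at (0::real))"
    by (intro tendsto_intros)
  then show ?thesis
    using isCont_tendsto_compose[OF Rser_cont[OF assms]] by simp
qed

definition cc :: "(real \<Rightarrow> real) \<Rightarrow> real \<Rightarrow> real \<Rightarrow> rtree list \<times> rtree list \<Rightarrow> real" where
  "cc F m z ab = cinv (phi F m z) (fst ab) * phi F m z (snd ab)"

definition kk :: "rtree list \<times> rtree list \<Rightarrow> real" where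
  "kk ab = real (fnodes (snd ab))"

definition Mom :: "(real \<Rightarrow> real) \<Rightarrow> real \<Rightarrow> (rtree list \<times> rtree list) list \<Rightarrow> nat \<Rightarrow> real \<Rightarrow> real" where
  "Mom F m X j z = z ^ j * sum_list (map (\<lambda>ab. cc F m z ab * kk ab ^ j) X)"

definition Inv :: "(real \<Rightarrow> real) \<Rightarrow> real \<Rightarrow> real \<Rightarrow> (rtree list \<times> rtree list) list \<Rightarrow> nat \<Rightarrow> real \<Rightarrow> bool" where
  "Inv F m a X n f \<longleftrightarrow>
     (\<forall>ab\<in>set X. fnodes (snd ab) \<le> n) \<and>
     (\<forall>ab\<in>set X. \<exists>l. ((\<lambda>z. z ^ n * cc F m z ab) \<longlongrightarrow> l) (at 0)) \<and>
     (\<exists>M. (\<forall>j. (Mom F m X j \<longlongrightarrow> M j) (at 0)) \<and> (\<forall>j>n. M j = 0) \<and> M n = fact n * a ^ n / f)"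

definition prodl :: "(rtree list \<times> rtree list) list \<Rightarrow> (rtree list \<times> rtree list) list \<Rightarrow> (rtree list \<times> rtree list) list" where
  "prodl X Y = [(a @ a', b @ b'). (a, b) \<leftarrow> X, (a', b') \<leftarrow> Y]"

lemma sum_list_prodl:
  "sum_list (map h (prodl X Y)) = sum_list (map (\<lambda>x. sum_list (map (\<lambda>y. h (fst x @ fst y, snd x @ snd y)) Y)) X)"
  unfolding prodl_def by (induction X) (auto simp: split_def o_def)

lemma set_prodl: "ab \<in> set (prodl X Y) \<Longrightarrow> \<exists>x\<in>set X. \<exists>y\<in>set Y. ab = (fst x @ fst y, snd x @ snd y)"
  unfolding prodl_def by force

lemma sum_list_double:
  "sum_list (map (\<lambda>x. sum_list (map (\<lambda>y. f x * g y) Y)) X) = sum_list (map f X) * (sum_list (map g Y) :: real)"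
  by (induction X) (auto simp: algebra_simps sum_list_const_mult)

lemma sum_list_sum_swap:
  "sum_list (map (\<lambda>x. \<Sum>i\<in>A. f x i) X) = (\<Sum>i\<in>A. sum_list (map (\<lambda>x. f x i) X))"
  by (induction X) (auto simp: sum.distrib)

lemma sum_list_cmult: "sum_list (map (\<lambda>x. c * f x) X) = (c::real) * sum_list (map f X)"
  by (induction X) (auto simp: algebra_simps)

lemma cc_app: "cc F m z (a @ a', b @ b') = cc F m z (a, b) * cc F m z (a', b')"
  by (simp add: cc_def cinv_append phi_append)

lemma Mom_prodl:
  "Mom F m (prodl X Y) j z = (\<Sum>i\<le>j. real (j choose i) * Mom F m X i z * Mom F m Y (j - i) z)"
proof -
  have pt: "z ^ j * (cc F m z x * cc F m z y * (kk x + kk y) ^ j)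
      = (\<Sum>i\<le>j. real (j choose i) * (z ^ i * (cc F m z x * kk x ^ i)) * (z ^ (j - i) * (cc F m z y * kk y ^ (j - i))))"
    for x y
  proof -
    have "z ^ j * (cc F m z x * cc F m z y * (kk x + kk y) ^ j)
       = (\<Sum>i\<le>j. z ^ j * (cc F m z x * cc F m z y * (real (j choose i) * kk x ^ i * kk y ^ (j - i))))"
      by (simp add: binomial_ring sum_distrib_left)
    also have "\<dots> = (\<Sum>i\<le>j. real (j choose i) * (z ^ i * (cc F m z x * kk x ^ i)) * (z ^ (j - i) * (cc F m z y * kk y ^ (j - i))))"
    proof (rule sum.cong[OF refl])
      fix i assume "i \<in> {..j}"
      then have "z ^ j = z ^ i * z ^ (j - i)" by (simp add: power_add[symmetric])
      then show "z ^ j * (cc F m z x * cc F m z y * (real (j choose i) * kk x ^ i * kk y ^ (j - i)))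
        = real (j choose i) * (z ^ i * (cc F m z x * kk x ^ i)) * (z ^ (j - i) * (cc F m z y * kk y ^ (j - i)))"
        by (simp add: algebra_simps)
    qed
    finally show ?thesis .
  qed
  have "Mom F m (prodl X Y) j z = sum_list (map (\<lambda>x. sum_list (map (\<lambda>y. z ^ j * (cc F m z x * cc F m z y * (kk x + kk y) ^ j)) Y)) X)"
    unfolding Mom_def sum_list_prodl
    by (simp add: cc_app kk_def sum_list_cmult[symmetric] o_def split_def)
  also have "\<dots> = sum_list (map (\<lambda>x. sum_list (map (\<lambda>y. (\<Sum>i\<le>j. real (j choose i) * (z ^ i * (cc F m z x * kk x ^ i)) * (z ^ (j - i) * (cc F m z y * kk y ^ (j - i))))) Y)) X)"
    by (simp only: pt)
  also have "\<dots> = (\<Sum>i\<le>j. real (j choose i) * Mom F m X i z * Mom F m Y (j - i) z)"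
    unfolding sum_list_sum_swap
  proof (rule sum.cong[OF refl])
    fix i
    have "sum_list (map (\<lambda>x. sum_list (map (\<lambda>y. real (j choose i) * (z ^ i * (cc F m z x * kk x ^ i)) * (z ^ (j - i) * (cc F m z y * kk y ^ (j - i)))) Y)) X)
       = sum_list (map (\<lambda>x. real (j choose i) * (z ^ i * (cc F m z x * kk x ^ i))) X) * sum_list (map (\<lambda>y. z ^ (j - i) * (cc F m z y * kk y ^ (j - i))) Y)"
      by (rule sum_list_double)
    also have "\<dots> = real (j choose i) * Mom F m X i z * Mom F m Y (j - i) z"
      unfolding Mom_def sum_list_cmult by simp
    finally show "sum_list (map (\<lambda>x. sum_list (map (\<lambda>y. real (j choose i) * (z ^ i * (cc F m z x * kk x ^ i)) * (z ^ (j - i) * (cc F m z y * kk y ^ (j - i)))) Y)) X)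
       = real (j choose i) * Mom F m X i z * Mom F m Y (j - i) z" .
  qed
  finally show ?thesis .
qed

lemma Inv_prodl:
  assumes X: "Inv F m a X n1 f1" and Y: "Inv F m a Y n2 f2" and f: "f1 \<noteq> 0" "f2 \<noteq> 0"
  shows "Inv F m a (prodl X Y) (n1 + n2) (f1 * f2)"
proof -
  obtain M1 where M1: "\<forall>j. (Mom F m X j \<longlongrightarrow> M1 j) (at 0)" "\<forall>j>n1. M1 j = 0"
      "M1 n1 = fact n1 * a ^ n1 / f1" using X unfolding Inv_def by blast
  obtain M2 where M2: "\<forall>j. (Mom F m Y j \<longlongrightarrow> M2 j) (at 0)" "\<forall>j>n2. M2 j = 0"
      "M2 n2 = fact n2 * a ^ n2 / f2" using Y unfolding Inv_def by blast
  define M where "M j = (\<Sum>i\<le>j. real (j choose i) * M1 i * M2 (j - i))" for j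
  have A: "\<forall>ab\<in>set (prodl X Y). fnodes (snd ab) \<le> n1 + n2"
  proof
    fix ab assume "ab \<in> set (prodl X Y)"
    then obtain x y where xy: "x \<in> set X" "y \<in> set Y" "ab = (fst x @ fst y, snd x @ snd y)"
      using set_prodl by blast
    then show "fnodes (snd ab) \<le> n1 + n2" using X Y unfolding Inv_def by fastforce
  qed
  have B: "\<forall>ab\<in>set (prodl X Y). \<exists>l. ((\<lambda>z. z ^ (n1 + n2) * cc F m z ab) \<longlongrightarrow> l) (at 0)"
  proof
    fix ab assume "ab \<in> set (prodl X Y)"
    then obtain x y where xy: "x \<in> set X" "y \<in> set Y" "ab = (fst x @ fst y, snd x @ snd y)"
      using set_prodl by blast
    obtain l1 where l1: "((\<lambda>z. z ^ n1 * cc F m z x) \<longlongrightarrow> l1) (at 0)" using X xy unfolding Inv_def by blast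
    obtain l2 where l2: "((\<lambda>z. z ^ n2 * cc F m z y) \<longlongrightarrow> l2) (at 0)" using Y xy unfolding Inv_def by blast
    have "((\<lambda>z. (z ^ n1 * cc F m z x) * (z ^ n2 * cc F m z y)) \<longlongrightarrow> l1 * l2) (at 0)"
      by (rule tendsto_mult[OF l1 l2])
    moreover have "(\<lambda>z. (z ^ n1 * cc F m z x) * (z ^ n2 * cc F m z y)) = (\<lambda>z. z ^ (n1 + n2) * cc F m z ab)"
      using xy(3) by (auto simp: cc_app power_add algebra_simps split_def)
    ultimately show "\<exists>l. ((\<lambda>z. z ^ (n1 + n2) * cc F m z ab) \<longlongrightarrow> l) (at 0)" by auto
  qed
  have C: "\<forall>j. (Mom F m (prodl X Y) j \<longlongrightarrow> M j) (at 0)"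
    unfolding Mom_prodl M_def using M1(1) M2(1) by (auto intro!: tendsto_intros)
  have D: "\<forall>j>n1+n2. M j = 0"
  proof (intro allI impI)
    fix j assume j: "j > n1 + n2"
    have "real (j choose i) * M1 i * M2 (j - i) = 0" if "i \<le> j" for i
    proof (cases "i \<le> n1")
      case True then have "j - i > n2" using j that by simp
      then show ?thesis using M2(2) by simp
    next
      case False then show ?thesis using M1(2) by simp
    qed
    then show "M j = 0" unfolding M_def by (intro sum.neutral) auto
  qed
  have E: "M (n1 + n2) = fact (n1 + n2) * a ^ (n1 + n2) / (f1 * f2)"
  proof -
    let ?n = "n1 + n2"
    have z: "real (?n choose i) * M1 i * M2 (?n - i) = 0" if "i \<in> {..?n} - {n1}" for i
    proof (cases "i < n1")
      case True then have "?n - i > n2" by simp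
      then show ?thesis using M2(2) by simp
    next
      case False then have "i > n1" using that by auto
      then show ?thesis using M1(2) by simp
    qed
    have "M ?n = real (?n choose n1) * M1 n1 * M2 (?n - n1) + (\<Sum>i\<in>{..?n} - {n1}. real (?n choose i) * M1 i * M2 (?n - i))"
      unfolding M_def by (subst sum.remove[of _ n1]) auto
    also have "(\<Sum>i\<in>{..?n} - {n1}. real (?n choose i) * M1 i * M2 (?n - i)) = 0"
      using z by (intro sum.neutral) blast
    finally have "M ?n = real (?n choose n1) * M1 n1 * M2 n2" by simp
    also have "\<dots> = real (?n choose n1) * ((fact n1 * a ^ n1) * (fact n2 * a ^ n2) / (f1 * f2))"
      unfolding M1(3) M2(3) by (metis mult.assoc times_divide_times_eq)
    also have "(fact n1 * a ^ n1) * (fact n2 * a ^ n2) = fact n1 * fact n2 * (a ^ (n1 + n2) :: real)"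
      by (simp add: power_add algebra_simps)
    also have "real (?n choose n1) * (fact n1 * fact n2 * a ^ (n1 + n2) / (f1 * f2))
       = (fact n1 * fact n2 * real (?n choose n1)) * a ^ (n1 + n2) / (f1 * f2)"
      by (simp add: algebra_simps)
    also have "fact n1 * fact n2 * real (?n choose n1) = fact ?n"
    proof -
      have "fact n1 * fact n2 * (?n choose n1) = (fact ?n :: nat)"
        using binomial_fact_lemma[of n1 ?n] by simp
      then have "real (fact n1 * fact n2 * (?n choose n1)) = real (fact ?n)" by (simp only:)
      then show ?thesis by (simp only: of_nat_mult of_nat_fact)
    qed
    finally show ?thesis .
  qed
  show ?thesis unfolding Inv_def using A B C D E by blast
qed




lemma pt_alg:
  fixes z k cc mp a R :: real and c :: "nat \<Rightarrow> real"
  assumes x: "x = z * (k + 1)" "x \<noteq> 0" and j: "j \<ge> 1"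
  shows "z ^ j * (cc * (mp * (a / x + ((\<Sum>p<n. c p * x ^ p) + x ^ n * R))) * (k + 1) ^ j)
    = mp * (a * (cc * x ^ (j - 1)) + (\<Sum>p<n. c p * (cc * x ^ (j + p))) + (z ^ n * cc) * (z ^ j * ((k + 1) ^ (j + n) * R)))"
proof -
  have xj: "z ^ j * (k + 1) ^ j = x ^ j" using x by (simp add: power_mult_distrib)
  have "x ^ j = x * x ^ (j - 1)" using j by (cases j) auto
  then have e1: "x ^ j * (a / x) = a * x ^ (j - 1)" using x(2) by simp
  have e2: "x ^ j * (\<Sum>p<n. c p * x ^ p) = (\<Sum>p<n. c p * x ^ (j + p))"
    by (simp add: sum_distrib_left power_add algebra_simps)
  have e3: "x ^ j * (x ^ n * R) = z ^ n * (z ^ j * ((k + 1) ^ (j + n) * R))"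
    unfolding x(1) by (simp add: power_mult_distrib power_add mult_ac)
  have "z ^ j * (cc * (mp * (a / x + ((\<Sum>p<n. c p * x ^ p) + x ^ n * R))) * (k + 1) ^ j)
      = mp * cc * (x ^ j * (a / x) + x ^ j * (\<Sum>p<n. c p * x ^ p) + x ^ j * (x ^ n * R))"
    using xj by (simp add: algebra_simps)
  also have "\<dots> = mp * cc * (a * x ^ (j - 1) + (\<Sum>p<n. c p * x ^ (j + p)) + z ^ n * (z ^ j * ((k + 1) ^ (j + n) * R)))"
    by (simp only: e1 e2 e3)
  also have "\<dots> = mp * (a * (cc * x ^ (j - 1)) + (\<Sum>p<n. c p * (cc * x ^ (j + p))) + (z ^ n * cc) * (z ^ j * ((k + 1) ^ (j + n) * R)))"
    by (simp add: algebra_simps sum_distrib_left)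
  finally show ?thesis .
qed


lemma tendsto_sum_list:
  assumes "\<forall>x\<in>set X. ((f x :: _ \<Rightarrow> real) \<longlongrightarrow> L x) F"
  shows "((\<lambda>z. sum_list (map (\<lambda>x. f x z) X)) \<longlongrightarrow> sum_list (map L X)) F"
  using assms
proof (induction X)
  case Nil then show ?case by simp
next
  case (Cons x X)
  then show ?case by simp (rule tendsto_add; simp)
qed

lemma Inv_base: "Inv F m a [([],[])] 0 1"
proof -
  have C: "\<forall>j. (Mom F m [([],[])] j \<longlongrightarrow> (if j = 0 then 1 else 0)) (at 0)"
  proof
    fix j
    show "(Mom F m [([],[])] j \<longlongrightarrow> (if j = 0 then 1 else 0)) (at 0)"
      by (cases j) (simp_all add: Mom_def[abs_def] cc_def kk_def)
  qed
  have B: "((\<lambda>z. z ^ 0 * cc F m z ([], [])) \<longlongrightarrow> 1) (at 0)"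
    by (simp add: cc_def)
  show ?thesis unfolding Inv_def using C B by force
qed

lemma mpow_lim: "m > 0 \<Longrightarrow> ((\<lambda>z. m powr (- z)) \<longlongrightarrow> 1) (at (0::real))"
proof -
  assume m: "m > 0"
  have "((\<lambda>z. exp (- z * ln m)) \<longlongrightarrow> exp (- 0 * ln m)) (at (0::real))"
    by (intro tendsto_intros)
  then show ?thesis using m by (simp add: powr_def)
qed

lemma ev_small: "d > 0 \<Longrightarrow> eventually (\<lambda>z::real. z \<noteq> 0 \<and> \<bar>z\<bar> < d) (at 0)"
  unfolding eventually_at by (rule exI[of _ d]) (auto simp: dist_real_def)




lemma Inv_node:
  fixes F G :: "real \<Rightarrow> real" and c :: "nat \<Rightarrow> real"
  assumes F_eq: "\<And>x. F x = a / x + G x"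
    and G_def: "\<And>x. G x = (\<Sum>n. c n * x ^ n)"
    and hs: "\<forall>x. \<bar>x\<bar> < \<delta> \<longrightarrow> summable (\<lambda>n. c n * x ^ n)" and dpos: "\<delta> > 0" and mpos: "m > 0"
    and IH: "Inv F m a (fcop ts) (fnodes ts) f" and fpos: "f \<noteq> 0"
  shows "Inv F m a (tcop (Node ts)) (Suc (fnodes ts)) (real (Suc (fnodes ts)) * f)"
proof -
  define X where "X = fcop ts"
  define n where "n = fnodes ts"
  define W where "W ab z = m powr (- z) * F (z * (kk ab + 1))" for ab z
  have kk0: "kk ab \<ge> 0" for ab by (simp add: kk_def)
  have phiN: "phi F m z [Node v] = phi F m z v * W (u, v) z" for u v z
    by (simp add: W_def kk_def phi_Node[OF mpos] algebra_simps)
  have ccN: "cc F m z (u, [Node v]) = cc F m z (u, v) * W (u, v) z" for u v z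
    by (simp add: cc_def phiN[of _ _ u])
  have cc0: "cc F m z ([Node ts], []) = - sum_list (map (\<lambda>ab. cc F m z ab * W ab z) X)" for z
  proof -
    have eq: "map (\<lambda>(u, v). cinv (phi F m z) u * phi F m z [Node v]) X = map (\<lambda>ab. cc F m z ab * W ab z) X"
      by (rule map_cong[OF refl]) (auto simp: cc_def phiN)
    have h: "cc F m z ([Node ts], []) = - sum_list (map (\<lambda>(u, v). cinv (phi F m z) u * phi F m z [Node v]) X)"
      by (simp add: cc_def cinv_single X_def)
    show ?thesis unfolding h eq ..
  qed
  have tc: "tcop (Node ts) = ([Node ts], []) # map (\<lambda>(u, v). (u, [Node v])) X"
    unfolding X_def by (rule tcop_Node)
  have kkN: "kk (u, [Node v]) = kk (u, v) + 1" for u v by (simp add: kk_def)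
  have Mom_eq: "Mom F m (tcop (Node ts)) j z
     = z ^ j * (cc F m z ([Node ts], []) * 0 ^ j + sum_list (map (\<lambda>ab. cc F m z ab * W ab z * (kk ab + 1) ^ j) X))" for j z
  proof -
    have meq: "map (\<lambda>ab. cc F m z ab * kk ab ^ j) (map (\<lambda>(u, v). (u, [Node v])) X)
        = map (\<lambda>ab. cc F m z ab * W ab z * (kk ab + 1) ^ j) X"
      by (auto simp: ccN kkN)
    show ?thesis unfolding Mom_def tc list.map sum_list.Cons meq by (simp add: kk_def)
  qed
  have Xk: "\<forall>ab\<in>set X. kk ab \<le> real n"
    using IH unfolding Inv_def X_def n_def kk_def by auto
  have Gc: "G = Rser c 0" by (rule ext) (simp add: G_def Rser_def)
  have zW: "((\<lambda>z. z * W ab z) \<longlongrightarrow> a / (kk ab + 1)) (at 0)" for ab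
  proof -
    have g: "((\<lambda>z. G (z * (kk ab + 1))) \<longlongrightarrow> G 0) (at 0)"
      unfolding Gc by (rule Rser_tendsto[OF dpos hs])
    have "((\<lambda>z. m powr (- z) * (a / (kk ab + 1) + z * G (z * (kk ab + 1)))) \<longlongrightarrow> 1 * (a / (kk ab + 1) + 0 * G 0)) (at 0)"
      by (intro tendsto_intros mpow_lim[OF mpos] g)
    moreover have "eventually (\<lambda>z. m powr (- z) * (a / (kk ab + 1) + z * G (z * (kk ab + 1))) = z * W ab z) (at 0)"
    proof -
      have "eventually (\<lambda>z::real. z \<noteq> 0 \<and> \<bar>z\<bar> < 1) (at 0)" by (rule ev_small) simp
      then show ?thesis
      proof (rule eventually_mono)
        fix z :: real assume "z \<noteq> 0 \<and> \<bar>z\<bar> < 1"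
        then have z: "z \<noteq> 0" by simp
        have "kk ab + 1 \<noteq> 0" using kk0[of ab] by simp
        then have d: "z * (a / (z * (kk ab + 1))) = a / (kk ab + 1)" using z by simp
        have "z * W ab z = m powr (- z) * (z * (a / (z * (kk ab + 1))) + z * G (z * (kk ab + 1)))"
          by (simp add: W_def F_eq algebra_simps)
        then show "m powr (- z) * (a / (kk ab + 1) + z * G (z * (kk ab + 1))) = z * W ab z"
          unfolding d by simp
      qed
    qed
    ultimately show ?thesis by (auto intro: Lim_transform_eventually)
  qed
  have A: "\<forall>ab\<in>set (tcop (Node ts)). fnodes (snd ab) \<le> Suc (fnodes ts)"
    using IH unfolding tc Inv_def X_def by auto
  obtain L where L: "\<forall>ab\<in>set X. ((\<lambda>z. z ^ n * cc F m z ab) \<longlongrightarrow> L ab) (at 0)"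
    using IH unfolding Inv_def X_def n_def by metis
  have B: "\<forall>ab\<in>set (tcop (Node ts)). \<exists>l. ((\<lambda>z. z ^ Suc (fnodes ts) * cc F m z ab) \<longlongrightarrow> l) (at 0)"
  proof
    fix ab assume ab: "ab \<in> set (tcop (Node ts))"
    show "\<exists>l. ((\<lambda>z. z ^ Suc (fnodes ts) * cc F m z ab) \<longlongrightarrow> l) (at 0)"
    proof (cases "ab = ([Node ts], [])")
      case True
      have e: "z ^ Suc (fnodes ts) * cc F m z ab = - sum_list (map (\<lambda>ab. (z ^ n * cc F m z ab) * (z * W ab z)) X)" for z
        unfolding True cc0 n_def by (simp add: sum_list_cmult[symmetric] algebra_simps)
      have "((\<lambda>z. - sum_list (map (\<lambda>ab. (z ^ n * cc F m z ab) * (z * W ab z)) X)) \<longlongrightarrow>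
             - sum_list (map (\<lambda>ab. L ab * (a / (kk ab + 1))) X)) (at 0)"
        by (intro tendsto_minus tendsto_sum_list ballI tendsto_mult zW) (use L in auto)
      then show ?thesis unfolding e by blast
    next
      case False
      then obtain u v where uv: "ab = (u, [Node v])" "(u, v) \<in> set X" using ab unfolding tc by auto
      have e: "z ^ Suc (fnodes ts) * cc F m z ab = (z ^ n * cc F m z (u, v)) * (z * W (u, v) z)" for z
        unfolding uv ccN n_def by (simp add: algebra_simps)
      have "((\<lambda>z. (z ^ n * cc F m z (u, v)) * (z * W (u, v) z)) \<longlongrightarrow> L (u, v) * (a / (kk (u, v) + 1))) (at 0)"
        by (intro tendsto_mult zW) (use L uv in auto)
      then show ?thesis unfolding e by blast
    qed
  qed
  obtain M where M: "\<forall>j. (Mom F m X j \<longlongrightarrow> M j) (at 0)" "\<forall>j>n. M j = 0"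
      "M n = fact n * a ^ n / f" using IH unfolding Inv_def X_def n_def by blast
  define M' where "M' j = (if j = 0 then 0 else a * M (j - 1) + (\<Sum>p<n. c p * M (j + p)))" for j
  define Q where "Q q z = sum_list (map (\<lambda>ab. cc F m z ab * (z * (kk ab + 1)) ^ q) X)" for q z
  have Qeq: "Q q z = (\<Sum>i\<le>q. real (q choose i) * z ^ (q - i) * Mom F m X i z)" for q z
  proof -
    have pt: "cc F m z ab * (z * (kk ab + 1)) ^ q = (\<Sum>i\<le>q. real (q choose i) * z ^ (q - i) * (z ^ i * (cc F m z ab * kk ab ^ i)))" for ab
    proof -
      have bq: "(kk ab + 1) ^ q = (\<Sum>i\<le>q. real (q choose i) * kk ab ^ i)"
        by (simp add: binomial_ring)
      have "cc F m z ab * (z * (kk ab + 1)) ^ q = cc F m z ab * z ^ q * (\<Sum>i\<le>q. real (q choose i) * kk ab ^ i)"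
        by (simp only: power_mult_distrib bq mult.assoc)
      also have "\<dots> = (\<Sum>i\<le>q. cc F m z ab * z ^ q * (real (q choose i) * kk ab ^ i))"
        by (rule sum_distrib_left)
      also have "\<dots> = (\<Sum>i\<le>q. real (q choose i) * z ^ (q - i) * (z ^ i * (cc F m z ab * kk ab ^ i)))"
      proof (rule sum.cong[OF refl])
        fix i assume "i \<in> {..q}"
        then have "z ^ q = z ^ (q - i) * z ^ i" by (simp add: power_add[symmetric])
        then show "cc F m z ab * z ^ q * (real (q choose i) * kk ab ^ i) = real (q choose i) * z ^ (q - i) * (z ^ i * (cc F m z ab * kk ab ^ i))"
          by (simp add: algebra_simps)
      qed
      finally show ?thesis .
    qed
    show ?thesis unfolding Q_def pt sum_list_sum_swap Mom_def
      by (simp add: sum_list_cmult)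
  qed
  have Qlim: "(Q q \<longlongrightarrow> M q) (at 0)" for q
  proof -
    have "((\<lambda>z. \<Sum>i\<le>q. real (q choose i) * z ^ (q - i) * Mom F m X i z) \<longlongrightarrow> (\<Sum>i\<le>q. real (q choose i) * 0 ^ (q - i) * M i)) (at 0)"
      by (intro tendsto_intros M(1)[rule_format])
    moreover have "(\<Sum>i\<le>q. real (q choose i) * (0::real) ^ (q - i) * M i) = M q"
    proof -
      have "(\<Sum>i\<le>q. real (q choose i) * (0::real) ^ (q - i) * M i) = (\<Sum>i\<le>q. if i = q then M q else 0)"
        by (rule sum.cong) auto
      then show ?thesis by simp
    qed
    ultimately show ?thesis unfolding Qeq[abs_def] by simp
  qed
  define Rem where "Rem j z = sum_list (map (\<lambda>ab. (z ^ n * cc F m z ab) * (z ^ j * ((kk ab + 1) ^ (j + n) * Rser c n (z * (kk ab + 1))))) X)" for j z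
  have Remlim: "(Rem j \<longlongrightarrow> 0) (at 0)" if j: "j \<ge> 1" for j
  proof -
    have "(Rem j \<longlongrightarrow> sum_list (map (\<lambda>ab. L ab * (0 ^ j * ((kk ab + 1) ^ (j + n) * Rser c n 0))) X)) (at 0)"
      unfolding Rem_def[abs_def]
      by (intro tendsto_sum_list ballI tendsto_mult tendsto_const tendsto_power tendsto_ident_at
            Rser_tendsto[OF dpos hs]) (use L in auto)
    moreover have "(0::real) ^ j = 0" using j by simp
    ultimately show ?thesis by simp
  qed
  have C: "\<forall>j. (Mom F m (tcop (Node ts)) j \<longlongrightarrow> M' j) (at 0)"
  proof
    fix j
    show "(Mom F m (tcop (Node ts)) j \<longlongrightarrow> M' j) (at 0)"
    proof (cases "j = 0")
      case True
      have "Mom F m (tcop (Node ts)) j z = 0" for z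
        unfolding Mom_eq True cc0 by simp
      then have "Mom F m (tcop (Node ts)) j = (\<lambda>z. 0)" by (rule ext)
      then show ?thesis using True by (simp add: M'_def del: tcop.simps)
    next
      case False
      then have j: "j \<ge> 1" by simp
      have lim: "((\<lambda>z. m powr (- z) * (a * Q (j - 1) z + (\<Sum>p<n. c p * Q (j + p) z) + Rem j z)) \<longlongrightarrow>
           1 * (a * M (j - 1) + (\<Sum>p<n. c p * M (j + p)) + 0)) (at 0)"
        by (intro tendsto_intros mpow_lim[OF mpos] Qlim Remlim[OF j])
      have ev: "eventually (\<lambda>z. m powr (- z) * (a * Q (j - 1) z + (\<Sum>p<n. c p * Q (j + p) z) + Rem j z)
                 = Mom F m (tcop (Node ts)) j z) (at 0)"
      proof -
        have "eventually (\<lambda>z::real. z \<noteq> 0 \<and> \<bar>z\<bar> < \<delta> / (real n + 1)) (at 0)"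
          by (rule ev_small) (use dpos in simp)
        then show ?thesis
        proof (rule eventually_mono)
          fix z :: real assume zz: "z \<noteq> 0 \<and> \<bar>z\<bar> < \<delta> / (real n + 1)"
          have ptw: "z ^ j * (cc F m z ab * W ab z * (kk ab + 1) ^ j)
              = m powr (- z) * (a * (cc F m z ab * (z * (kk ab + 1)) ^ (j - 1))
                 + (\<Sum>p<n. c p * (cc F m z ab * (z * (kk ab + 1)) ^ (j + p)))
                 + (z ^ n * cc F m z ab) * (z ^ j * ((kk ab + 1) ^ (j + n) * Rser c n (z * (kk ab + 1)))))"
            if ab: "ab \<in> set X" for ab
          proof -
            define x where "x = z * (kk ab + 1)"
            have k1: "kk ab + 1 > 0" using kk0[of ab] by simp
            have "\<bar>x\<bar> = \<bar>z\<bar> * (kk ab + 1)" using k1 by (simp add: x_def abs_mult)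
            also have "\<dots> \<le> \<bar>z\<bar> * (real n + 1)" using Xk ab by (intro mult_left_mono) auto
            also have "\<dots> < \<delta>" using zz by (simp add: field_simps)
            finally have xd: "\<bar>x\<bar> < \<delta>" .
            have xnz: "x \<noteq> 0" using zz k1 by (simp add: x_def)
            have Gx: "G x = (\<Sum>p<n. c p * x ^ p) + x ^ n * Rser c n x"
              unfolding G_def by (rule powser_split) (use hs xd in auto)
            have "z ^ j * (cc F m z ab * W ab z * (kk ab + 1) ^ j)
                = z ^ j * (cc F m z ab * (m powr (- z) * (a / x + ((\<Sum>p<n. c p * x ^ p) + x ^ n * Rser c n x))) * (kk ab + 1) ^ j)"
              by (simp only: W_def F_eq x_def[symmetric] Gx)
            also have "\<dots> = m powr (- z) * (a * (cc F m z ab * x ^ (j - 1)) + (\<Sum>p<n. c p * (cc F m z ab * x ^ (j + p))) + (z ^ n * cc F m z ab) * (z ^ j * ((kk ab + 1) ^ (j + n) * Rser c n x)))"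
              by (rule pt_alg[OF x_def xnz j])
            finally show ?thesis by (simp add: x_def)
          qed
          have "Mom F m (tcop (Node ts)) j z = sum_list (map (\<lambda>ab. z ^ j * (cc F m z ab * W ab z * (kk ab + 1) ^ j)) X)"
            unfolding Mom_eq using j by (simp add: sum_list_cmult)
          also have "\<dots> = sum_list (map (\<lambda>ab. m powr (- z) * (a * (cc F m z ab * (z * (kk ab + 1)) ^ (j - 1))
                 + (\<Sum>p<n. c p * (cc F m z ab * (z * (kk ab + 1)) ^ (j + p)))
                 + (z ^ n * cc F m z ab) * (z ^ j * ((kk ab + 1) ^ (j + n) * Rser c n (z * (kk ab + 1)))))) X)"
            by (rule arg_cong[where f=sum_list], rule map_cong[OF refl], rule ptw)
          also have "\<dots> = m powr (- z) * (a * Q (j - 1) z + (\<Sum>p<n. c p * Q (j + p) z) + Rem j z)"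
            unfolding sum_list_cmult sum_list_addf sum_list_sum_swap Q_def Rem_def
            by (simp add: sum_list_cmult)
          finally show "m powr (- z) * (a * Q (j - 1) z + (\<Sum>p<n. c p * Q (j + p) z) + Rem j z)
                 = Mom F m (tcop (Node ts)) j z" by simp
        qed
      qed
      have "M' j = 1 * (a * M (j - 1) + (\<Sum>p<n. c p * M (j + p)) + 0)"
        using False by (simp add: M'_def)
      then show ?thesis using Lim_transform_eventually[OF lim ev] by simp
    qed
  qed
  have D: "\<forall>j>Suc (fnodes ts). M' j = 0"
  proof (intro allI impI)
    fix j assume j: "j > Suc (fnodes ts)"
    have h1: "c p * M (j + p) = 0" for p using M(2) j by (simp add: n_def)
    have h2: "(\<Sum>p<n. c p * M (j + p)) = 0" by (simp only: h1 sum.neutral_const)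
    moreover have "M (j - 1) = 0" using M(2) j by (simp add: n_def)
    ultimately show "M' j = 0" using j by (simp add: M'_def)
  qed
  have E: "M' (Suc (fnodes ts)) = fact (Suc (fnodes ts)) * a ^ Suc (fnodes ts) / (real (Suc (fnodes ts)) * f)"
  proof -
    have h1: "c p * M (Suc n + p) = 0" for p using M(2) by simp
    have h2: "(\<Sum>p<n. c p * M (Suc n + p)) = 0" by (simp only: h1 sum.neutral_const)
    then have "M' (Suc n) = a * M n" by (simp add: M'_def)
    also have "\<dots> = a * (fact n * a ^ n / f)" using M(3) by simp
    also have "\<dots> = fact (Suc n) * a ^ Suc n / (real (Suc n) * f)"
    proof -
      have "fact (Suc n) * a ^ Suc n / (real (Suc n) * f) = (real (Suc n) * (a * (fact n * a ^ n))) / (real (Suc n) * f)"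
        by (simp only: fact_Suc of_nat_mult power_Suc) (simp add: mult_ac)
      also have "\<dots> = a * (fact n * a ^ n) / f"
        by (rule mult_divide_mult_cancel_left) simp
      finally show ?thesis by simp
    qed
    finally show ?thesis by (simp add: n_def)
  qed
  show ?thesis unfolding Inv_def using A B C D E by blast
qed




lemma tfact_nz: "tfact t \<noteq> 0"
proof (induction t)
  case (Node ts)
  have "\<forall>x\<in>set ts. tfact x \<noteq> 0" using Node.IH by blast
  then have "prod_list (map tfact ts) \<noteq> 0" by (auto simp: prod_list_zero_iff)
  then show ?case by simp
qed

lemma tfact_pos: "tfact t > 0"
  using tfact_nz[of t] by simp

lemma ffact_pos: "ffact w > 0"
  unfolding ffact_def using tfact_pos by (induction w) auto

lemma tfact_Node: "tfact (Node ts) = Suc (fnodes ts) * ffact ts"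
  by (simp add: ffact_def)

lemma fcop_Cons_prodl: "fcop (t # ws) = prodl (tcop t) (fcop ws)"
  by (simp add: fcop_Cons prodl_def)

lemma Inv_all:
  fixes G :: "real \<Rightarrow> real" and c :: "nat \<Rightarrow> real"
  assumes F_eq: "\<And>x. F x = a / x + G x"
    and G_def: "\<And>x. G x = (\<Sum>n. c n * x ^ n)"
    and hs: "\<forall>x. \<bar>x\<bar> < \<delta> \<longrightarrow> summable (\<lambda>n. c n * x ^ n)" and dpos: "\<delta> > 0" and mpos: "m > 0"
  shows "Inv F m a (tcop t) (nodes t) (real (tfact t))"
proof (induction t)
  case (Node ts)
  have "Inv F m a (fcop ts) (fnodes ts) (real (ffact ts))"
    using Node
  proof (induction ts)
    case Nil
    then show ?case using Inv_base[of F m a] by (simp add: ffact_def)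
  next
    case (Cons t ws)
    have t: "Inv F m a (tcop t) (nodes t) (real (tfact t))" using Cons.prems by simp
    have ws: "Inv F m a (fcop ws) (fnodes ws) (real (ffact ws))" using Cons by simp
    have "Inv F m a (prodl (tcop t) (fcop ws)) (nodes t + fnodes ws) (real (tfact t) * real (ffact ws))"
      by (rule Inv_prodl[OF t ws]) (use tfact_pos ffact_pos in \<open>simp_all add: Suc_le_eq\<close>)
    then show ?case by (simp add: fcop_Cons_prodl ffact_def)
  qed
  then have "Inv F m a (tcop (Node ts)) (Suc (fnodes ts)) (real (Suc (fnodes ts)) * real (ffact ts))"
    by (rule Inv_node[OF F_eq G_def hs dpos mpos]) (use ffact_pos in \<open>simp add: Suc_le_eq\<close>)
  then show ?case by (simp only: tfact_Node of_nat_mult nodes_Node)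
qed

lemma Inv_forest:
  fixes G :: "real \<Rightarrow> real" and c :: "nat \<Rightarrow> real"
  assumes F_eq: "\<And>x. F x = a / x + G x"
    and G_def: "\<And>x. G x = (\<Sum>n. c n * x ^ n)"
    and hs: "\<forall>x. \<bar>x\<bar> < \<delta> \<longrightarrow> summable (\<lambda>n. c n * x ^ n)" and dpos: "\<delta> > 0" and mpos: "m > 0"
  shows "Inv F m a (fcop w) (fnodes w) (real (ffact w))"
proof (induction w)
  case Nil
  then show ?case using Inv_base[of F m a] by (simp add: ffact_def)
next
  case (Cons t ws)
  have t: "Inv F m a (tcop t) (nodes t) (real (tfact t))" by (rule Inv_all[OF F_eq G_def hs dpos mpos])
  have "Inv F m a (prodl (tcop t) (fcop ws)) (nodes t + fnodes ws) (real (tfact t) * real (ffact ws))"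
    by (rule Inv_prodl[OF t Cons]) (use tfact_pos ffact_pos in \<open>simp_all add: Suc_le_eq\<close>)
  then show ?case by (simp add: fcop_Cons_prodl ffact_def)
qed

definition ce :: "nat \<Rightarrow> real" where "ce j = inverse (fact j)"

lemma exp_split: "exp (y::real) = (\<Sum>j<N. ce j * y ^ j) + y ^ N * Rser ce N y"
proof -
  have "exp y = (\<Sum>n. ce n * y ^ n)"
    using exp_converges[of y] by (simp add: sums_iff ce_def scaleR_conv_of_real divide_inverse mult.commute)
  also have "\<dots> = (\<Sum>j<N. ce j * y ^ j) + y ^ N * Rser ce N y"
    by (rule powser_split) (simp add: ce_def summable_exp)
  finally show ?thesis .
qed

lemma phiR_limit:
  fixes G :: "real \<Rightarrow> real" and c :: "nat \<Rightarrow> real"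
  assumes F_eq: "\<And>x. F x = a / x + G x"
    and G_def: "\<And>x. G x = (\<Sum>n. c n * x ^ n)"
    and hs: "\<forall>x. \<bar>x\<bar> < \<delta> \<longrightarrow> summable (\<lambda>n. c n * x ^ n)" and dpos: "\<delta> > 0" and mpos: "m > 0"
  shows "\<exists>p :: real poly.
           (\<forall>s>0. ((\<lambda>z. phiR F m s z w) \<longlongrightarrow> poly p (ln (s / m))) (at 0))
         \<and> degree p \<le> fnodes w
         \<and> coeff p (fnodes w) = (- a) ^ fnodes w / real (ffact w)"
proof -
  define n where "n = fnodes w"
  define X where "X = fcop w"
  have I: "Inv F m a X n (real (ffact w))" unfolding X_def n_def by (rule Inv_forest[OF F_eq G_def hs dpos mpos])
  obtain M where M: "\<forall>j. (Mom F m X j \<longlongrightarrow> M j) (at 0)" "\<forall>j>n. M j = 0"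
      "M n = fact n * a ^ n / real (ffact w)" using I unfolding Inv_def by blast
  obtain Lm where Lm: "\<forall>ab\<in>set X. ((\<lambda>z. z ^ n * cc F m z ab) \<longlongrightarrow> Lm ab) (at 0)"
    using I unfolding Inv_def by metis
  define p :: "real poly" where "p = (\<Sum>j\<le>n. monom ((-1) ^ j * M j / fact j) j)"
  have lim: "((\<lambda>z. phiR F m s z w) \<longlongrightarrow> poly p (ln (s / m))) (at 0)" if s: "s > 0" for s
  proof -
    define L where "L = ln (s / m)"
    define Rem where "Rem z = sum_list (map (\<lambda>ab. (z ^ n * cc F m z ab) * (z * ((- L * kk ab) ^ Suc n * Rser ce (Suc n) (z * (- L * kk ab))))) X)" for z
    have eq: "phiR F m s z w = (\<Sum>j\<le>n. (- L) ^ j / fact j * Mom F m X j z) + Rem z" for z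
    proof -
      have pt: "cinv (phi F m z) (fst ab) * phi F s z (snd ab)
          = (\<Sum>j\<le>n. (- L) ^ j / fact j * (z ^ j * (cc F m z ab * kk ab ^ j)))
            + (z ^ n * cc F m z ab) * (z * ((- L * kk ab) ^ Suc n * Rser ce (Suc n) (z * (- L * kk ab))))" for ab
      proof -
        define y where "y = z * (- L * kk ab)"
        have "cinv (phi F m z) (fst ab) * phi F s z (snd ab) = cc F m z ab * exp y"
          by (simp add: cc_def phi_shift[OF s mpos] y_def L_def kk_def algebra_simps)
        also have "\<dots> = cc F m z ab * ((\<Sum>j<Suc n. ce j * y ^ j) + y ^ Suc n * Rser ce (Suc n) y)"
          by (subst exp_split[of y "Suc n"]) (rule refl)
        also have "\<dots> = (\<Sum>j\<le>n. cc F m z ab * (ce j * y ^ j)) + cc F m z ab * (y ^ Suc n * Rser ce (Suc n) y)"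
          by (simp add: lessThan_Suc_atMost sum_distrib_left distrib_left)
        also have "(\<Sum>j\<le>n. cc F m z ab * (ce j * y ^ j)) = (\<Sum>j\<le>n. (- L) ^ j / fact j * (z ^ j * (cc F m z ab * kk ab ^ j)))"
        proof (rule sum.cong[OF refl])
          fix j
          have yj: "y ^ j = z ^ j * ((- L) ^ j * kk ab ^ j)" by (simp only: y_def power_mult_distrib)
          show "cc F m z ab * (ce j * y ^ j) = (- L) ^ j / fact j * (z ^ j * (cc F m z ab * kk ab ^ j))"
            unfolding yj by (simp add: ce_def divide_inverse mult_ac)
        qed
        also have "cc F m z ab * (y ^ Suc n * Rser ce (Suc n) y) = (z ^ n * cc F m z ab) * (z * ((- L * kk ab) ^ Suc n * Rser ce (Suc n) (z * (- L * kk ab))))"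
          by (simp only: y_def power_mult_distrib power_Suc mult_ac)
        finally show ?thesis .
      qed
      have "phiR F m s z w = sum_list (map (\<lambda>ab. cinv (phi F m z) (fst ab) * phi F s z (snd ab)) X)"
        by (simp add: phiR_def conv_def X_def split_def)
      also have "\<dots> = sum_list (map (\<lambda>ab. (\<Sum>j\<le>n. (- L) ^ j / fact j * (z ^ j * (cc F m z ab * kk ab ^ j)))
            + (z ^ n * cc F m z ab) * (z * ((- L * kk ab) ^ Suc n * Rser ce (Suc n) (z * (- L * kk ab))))) X)"
        by (simp only: pt)
      also have "\<dots> = (\<Sum>j\<le>n. (- L) ^ j / fact j * Mom F m X j z) + Rem z"
        unfolding sum_list_addf sum_list_sum_swap Rem_def
        by (simp only: sum_list_cmult Mom_def)
      finally show ?thesis .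
    qed
    have hs': "\<forall>x. \<bar>x\<bar> < 1 \<longrightarrow> summable (\<lambda>n. ce n * x ^ n)" by (simp add: ce_def summable_exp)
    have remlim: "(Rem \<longlongrightarrow> sum_list (map (\<lambda>ab. Lm ab * (0 * ((- L * kk ab) ^ Suc n * Rser ce (Suc n) 0))) X)) (at 0)"
      unfolding Rem_def[abs_def]
    proof (rule tendsto_sum_list, rule ballI)
      fix ab assume ab: "ab \<in> set X"
      show "((\<lambda>z. (z ^ n * cc F m z ab) * (z * ((- L * kk ab) ^ Suc n * Rser ce (Suc n) (z * (- L * kk ab)))))
          \<longlongrightarrow> Lm ab * (0 * ((- L * kk ab) ^ Suc n * Rser ce (Suc n) 0))) (at 0)"
        by (rule tendsto_mult[OF _ tendsto_mult[OF tendsto_ident_at tendsto_mult[OF tendsto_const Rser_tendsto[OF zero_less_one hs']]]])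
           (use Lm ab in auto)
    qed
    have z0: "sum_list (map (\<lambda>ab. Lm ab * (0 * ((- L * kk ab) ^ Suc n * Rser ce (Suc n) 0))) X) = 0"
      by (induction X) simp_all
    have remlim0: "(Rem \<longlongrightarrow> 0) (at 0)" using remlim unfolding z0 .
    have l1: "((\<lambda>z. (\<Sum>j\<le>n. (- L) ^ j / fact j * Mom F m X j z) + Rem z) \<longlongrightarrow>
           (\<Sum>j\<le>n. (- L) ^ j / fact j * M j) + 0) (at 0)"
      by (rule tendsto_add[OF tendsto_sum remlim0]) (rule tendsto_mult[OF tendsto_const M(1)[rule_format]])
    have peq: "(\<Sum>j\<le>n. (- L) ^ j / fact j * M j) = poly p L"
      unfolding p_def poly_sum poly_monom
    proof (rule sum.cong[OF refl])
      fix j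
      show "(- L) ^ j / fact j * M j = (- 1) ^ j * M j / fact j * L ^ j"
        unfolding power_minus[of L j] by (simp add: divide_inverse mult_ac)
    qed
    have lim2: "((\<lambda>z. (\<Sum>j\<le>n. (- L) ^ j / fact j * Mom F m X j z) + Rem z) \<longlongrightarrow> poly p L) (at 0)"
      using l1 unfolding peq add_0_right .
    show ?thesis unfolding eq L_def[symmetric] by (rule lim2)
  qed
  have deg: "degree p \<le> n"
    unfolding p_def
  proof (rule degree_sum_le)
    fix j assume "j \<in> {..n}"
    then have jn: "j \<le> n" by simp
    have "degree (monom ((-1) ^ j * M j / fact j) j) \<le> j" by (rule degree_monom_le)
    then show "degree (monom ((-1) ^ j * M j / fact j) j) \<le> n" using jn by (rule le_trans)
  qed simp
  have co: "coeff p n = (- a) ^ n / real (ffact w)"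
  proof -
    have "coeff p n = (\<Sum>j\<le>n. if n = j then (-1) ^ j * M j / fact j else 0)"
      unfolding p_def coeff_sum coeff_monom by simp
    also have "\<dots> = (-1) ^ n * M n / fact n" by simp
    also have "\<dots> = (- a) ^ n / real (ffact w)"
      unfolding M(3) power_minus[of a n] by (simp add: divide_inverse mult_ac)
    finally show ?thesis .
  qed
  show ?thesis using lim deg co unfolding n_def by blast
qed


theorem mainTheorem8:
  fixes f :: "real \<Rightarrow> real" and c \<epsilon> \<delta> \<mu> cm :: real and cn :: "nat \<Rightarrow> real"
    and w :: "rtree list"
  assumes f_cont: "continuous_on {0..} f"
    and eps_pos: "\<epsilon> > 0"
    and f_asymp: "(\<lambda>\<zeta>. f \<zeta> - c / \<zeta>) \<in> O[at_top](\<lambda>\<zeta>. \<zeta> powr (-1 - \<epsilon>))"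
    and delta_pos: "\<delta> > 0"
    and conv_ser: "\<forall>z. \<bar>z\<bar> < \<delta> \<longrightarrow> summable (\<lambda>n. cn n * z ^ n)"
    and mellin: "\<forall>z\<in>{0<..<\<delta>}.
                   ((\<lambda>\<zeta>. f \<zeta> * \<zeta> powr (- z)) has_integral Lser cm cn z) {0<..}"
    and mu_pos: "\<mu> > 0"
  shows "\<exists>p :: real poly.
           (\<forall>s>0. ((\<lambda>z. phiR (Lser cm cn) \<mu> s z w) \<longlongrightarrow> poly p (ln (s / \<mu>))) (at 0))
         \<and> degree p \<le> fnodes w
         \<and> coeff p (fnodes w) = (- cm) ^ fnodes w / real (ffact w)"
proof (rule phiR_limit[where G = "\<lambda>x. \<Sum>n. cn n * x ^ n" and c = cn and \<delta> = \<delta>])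
  show "\<And>x. Lser cm cn x = cm / x + (\<Sum>n. cn n * x ^ n)" by (simp add: Lser_def)
qed (use conv_ser delta_pos mu_pos in auto)

end
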